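(* Let $H\in(\frac12,1)$, $T>0$, $\alpha=\lambda-\mathrm{i}w$ with $w\in\mathbb{R}$, $\lambda=\operatorname{Re}(\alpha)>0$. For $t\in[0,T)$ let $\psi_t(u,v)=(T-u)^{\bar\alpha-1}(T-v)^{-\bar\alpha}\mathbf{1}_{\{0\le v\le u\le t\}}$ and $G_t=I_{1,1}(\psi_t)$. Then - if $\operatorname{Re}(\alpha)\in(0,1-H)$: $\limsup_{t\to T}(T-t)^{2(1-H-\lambda)}\mathbb{E}[|G_t|^2]<\infty$; - if $\operatorname{Re}(\alpha)=1-H$: $\limsup_{t\to T}\frac{1}{-\log(T-t)}\mathbb{E}[|G_t|^2]<\infty$; - if $\operatorname{Re}(\alpha)\in(1-H,1)$: $\lim_{t\to T}\mathbb{E}[|G_t|^2]<\infty$.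
   Context: For $z\in\mathbb{C}$, $x>0$: $x^z:=\exp(z\log x)$. $\zeta_t=\frac1{\sqrt2}(B^1_t+\mathrm{i}B^2_t)$ with $B^1,B^2$ independent fractional Brownian motions with Hurst parameter $H$. Let $\mathfrak{H}$ be the complex Hilbert space obtained by completing complex step functions on $[0,T]$ under $\langle f,g\rangle_{\mathfrak H}=H(2H-1)\int_{[0,T]^2}f(t)\overline{g(s)}|t-s|^{2H-2}\mathrm{d}t\mathrm{d}s$; for deterministic $g$, $\zeta(g):=\int_0^Tg\,\mathrm{d}\zeta$ is the Wiener integral, with $\mathbb{E}[\zeta(g)\overline{\zeta(h)}]=\langle g,h\rangle_{\mathfrak H}$. The complex double Wiener–It\^o integral $I_{1,1}$ is the linear map on $\mathfrak H\otimes\mathfrak H$ with $I_{1,1}(f)=\zeta(g)\overline{\zeta(h)}-\langle g,h\rangle_{\mathfrak H}$ for $f(u,v)=g(u)\overline{h(v)}$, extended by linearity and the isometry $\mathbb{E}|I_{1,1}(f)|^2=\|f\|^2_{\mathfrak H\otimes\mathfrak H}=(H(2H-1))^2\int_{[0,T]^4}f(u_1,v_1)\overline{f(u_2,v_2)}|u_1-u_2|^{2H-2}|v_1-v_2|^{2H-2}\mathrm{d}u_1\mathrm{d}u_2\mathrm{d}v_1\mathrm{d}v_2$. *)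

theory Defs
  imports "HOL-Analysis.Analysis"
begin

text \<open>Complex power of a positive real: x^z = exp(z log x); for x > 0 this is
  exactly Isabelle's complex powr applied to of_real x.\<close>

definition psi :: "real \<Rightarrow> complex \<Rightarrow> real \<Rightarrow> real \<Rightarrow> real \<Rightarrow> complex" where
  "psi T \<alpha> t u v =
     (if 0 \<le> v \<and> v \<le> u \<and> u \<le> t
      then (complex_of_real (T - u)) powr (cnj \<alpha> - 1) * (complex_of_real (T - v)) powr (- cnj \<alpha>)
      else 0)"

text \<open>Integrand of the squared norm in the tensor space H (x) H, variables (u1,u2,v1,v2).\<close>
definition tensor_integrand ::
  "real \<Rightarrow> (real \<Rightarrow> real \<Rightarrow> complex) \<Rightarrow> real \<times> real \<times> real \<times> real \<Rightarrow> complex" where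
  "tensor_integrand H f = (\<lambda>(u1, u2, v1, v2).
      complex_of_real ((H * (2 * H - 1))^2) * f u1 v1 * cnj (f u2 v2)
      * complex_of_real (\<bar>u1 - u2\<bar> powr (2 * H - 2) * \<bar>v1 - v2\<bar> powr (2 * H - 2)))"

definition cube4 :: "real \<Rightarrow> (real \<times> real \<times> real \<times> real) set" where
  "cube4 T = {0..T} \<times> {0..T} \<times> {0..T} \<times> {0..T}"

text \<open>Squared norm in H (x) H (real-valued; the complex integral is real).\<close>
definition tensor_norm2 :: "real \<Rightarrow> real \<Rightarrow> (real \<Rightarrow> real \<Rightarrow> complex) \<Rightarrow> real" where
  "tensor_norm2 H T f = Re (set_lebesgue_integral lborel (cube4 T) (tensor_integrand H f))"

text \<open>E|G_t|^2 = E|I_{1,1}(psi_t)|^2 = ||psi_t||^2 by the isometry of I_{1,1}.\<close>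
definition second_moment_G :: "real \<Rightarrow> real \<Rightarrow> complex \<Rightarrow> real \<Rightarrow> real" where
  "second_moment_G H T \<alpha> t = tensor_norm2 H T (psi T \<alpha> t)"

end

theory Submission
  imports Defs
begin


lemma reflect_nn:
  fixes f :: "real \<Rightarrow> ennreal"
  assumes "f \<in> borel_measurable borel"
  shows "(\<integral>\<^sup>+x. f (c - x) \<partial>lborel) = (\<integral>\<^sup>+x. f x \<partial>lborel)"
  using nn_integral_real_affine[OF assms, of "-1" c] by simp

lemma powr_from0_nn:
  fixes p c :: real
  assumes "-1 < p" "0 \<le> c"
  shows "(\<integral>\<^sup>+x. ennreal (indicator {0..c} x * x powr p) \<partial>lborel) = ennreal (c powr (p+1) / (p+1))"
  by (rule nn_integral_has_integral_lebesgue) (use has_integral_powr_from_0[OF assms] in auto)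

lemma powr_toinf_nn:
  fixes p a :: real
  assumes "p < -1" "0 < a"
  shows "(\<integral>\<^sup>+x. ennreal (indicator {a..} x * x powr p) \<partial>lborel) = ennreal (-(a powr (p+1)) / (p+1))"
  by (rule nn_integral_has_integral_lebesgue) (use has_integral_powr_to_inf[OF assms] in auto)

lemma sym_fin:
  fixes q c :: real
  assumes "-1 < q" "0 \<le> c"
  shows "(\<integral>\<^sup>+s. ennreal (indicator {-c..c} s * \<bar>s\<bar> powr q) \<partial>lborel) \<le> ennreal (2 * (c powr (q+1) / (q+1)))"
proof -
  have "(\<integral>\<^sup>+s. ennreal (indicator {-c..c} s * \<bar>s\<bar> powr q) \<partial>lborel)
     \<le> (\<integral>\<^sup>+s. ennreal (indicator {0..c} s * s powr q) + ennreal (indicator {0..c} (0 - s) * (0 - s) powr q) \<partial>lborel)"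
    apply (rule nn_integral_mono)
    apply (auto simp: indicator_def)
    done
  also have "\<dots> = (\<integral>\<^sup>+s. ennreal (indicator {0..c} s * s powr q) \<partial>lborel) + (\<integral>\<^sup>+s. ennreal (indicator {0..c} (0 - s) * (0 - s) powr q) \<partial>lborel)"
    by (rule nn_integral_add) auto
  also have "(\<integral>\<^sup>+s. ennreal (indicator {0..c} (0 - s) * (0 - s) powr q) \<partial>lborel) = (\<integral>\<^sup>+s. ennreal (indicator {0..c} s * s powr q) \<partial>lborel)"
    by (rule reflect_nn[where f="\<lambda>s. ennreal (indicator {0..c} s * s powr q)"]) measurable
  also have "(\<integral>\<^sup>+s. ennreal (indicator {0..c} s * s powr q) \<partial>lborel) = ennreal (c powr (q+1) / (q+1))"
    using powr_from0_nn assms by simp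
  finally show ?thesis using assms by (simp add: ennreal_plus[symmetric] del: ennreal_plus)
qed

lemma Dfin_pw:
  fixes \<mu> q r :: real
  assumes "0 < \<mu>" "\<mu> < 1" "q < 0"
  shows "indicator {0<..} r * r powr (\<mu>-1) * \<bar>1-r\<bar> powr q
    \<le> (1/2) powr q * (indicator {0..1/2} r * r powr (\<mu>-1))
     + (1/2) powr (\<mu>-1) * (indicator {-1..1} (1 - r) * \<bar>1 - r\<bar> powr q)
     + (1/2) powr q * (indicator {2..} r * r powr (\<mu>-1+q))"
proof (cases "r > 0")
  case False then show ?thesis
    by (auto simp: indicator_def intro!: add_nonneg_nonneg mult_nonneg_nonneg)
next
  case r: True
  have nn: "0 \<le> (1/2) powr q * (indicator {0..1/2} r * r powr (\<mu>-1))"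
           "0 \<le> (1/2) powr (\<mu>-1) * (indicator {-1..1} (1 - r) * \<bar>1 - r\<bar> powr q)"
           "0 \<le> (1/2) powr q * (indicator {2..} r * r powr (\<mu>-1+q))"
    by (auto simp: indicator_def)
  consider "r \<le> 1/2" | "1/2 < r" "r \<le> 2" | "2 < r" by linarith
  then show ?thesis
  proof cases
    case 1
    have "\<bar>1-r\<bar> powr q \<le> (1/2) powr q"
      by (rule powr_mono2') (use 1 assms in auto)
    then have "indicator {0<..} r * r powr (\<mu>-1) * \<bar>1-r\<bar> powr q \<le> (1/2) powr q * (indicator {0..1/2} r * r powr (\<mu>-1))"
      using 1 r by (simp add: indicator_def mult.commute)
    then show ?thesis using nn by linarith
  next
    case 2
    have "r powr (\<mu>-1) \<le> (1/2) powr (\<mu>-1)"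
      by (rule powr_mono2') (use 2 assms in auto)
    then have "indicator {0<..} r * r powr (\<mu>-1) * \<bar>1-r\<bar> powr q \<le> (1/2) powr (\<mu>-1) * (indicator {-1..1} (1 - r) * \<bar>1 - r\<bar> powr q)"
      using 2 r by (simp add: indicator_def mult_right_mono)
    then show ?thesis using nn by linarith
  next
    case 3
    have "\<bar>1-r\<bar> powr q \<le> (r/2) powr q"
      by (rule powr_mono2') (use 3 assms in auto)
    also have "\<dots> = (1/2) powr q * r powr q" by (simp add: powr_divide)
    finally have "r powr (\<mu>-1) * \<bar>1-r\<bar> powr q \<le> r powr (\<mu>-1) * ((1/2) powr q * r powr q)"
      by (simp add: mult_left_mono)
    also have "\<dots> = (1/2) powr q * r powr (\<mu>-1+q)" by (simp add: powr_add)
    finally have "indicator {0<..} r * r powr (\<mu>-1) * \<bar>1-r\<bar> powr q \<le> (1/2) powr q * (indicator {2..} r * r powr (\<mu>-1+q))"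
      using 3 r by (simp add: indicator_def)
    then show ?thesis using nn by linarith
  qed
qed

lemma Dfin:
  fixes \<mu> q :: real
  assumes "0 < \<mu>" "\<mu> < 1" "-1 < q" "\<mu> + q < 0"
  shows "(\<integral>\<^sup>+r. ennreal (indicator {0<..} r * r powr (\<mu>-1) * \<bar>1-r\<bar> powr q) \<partial>lborel) < \<infinity>"
proof -
  let ?A = "\<lambda>r. ennreal (indicator {0..1/2} r * r powr (\<mu>-1))"
  let ?B = "\<lambda>r. ennreal (indicator {-1..1} r * \<bar>r\<bar> powr q)"
  let ?C = "\<lambda>r. ennreal (indicator {2..} r * r powr (\<mu>-1+q))"
  have "(\<integral>\<^sup>+r. ennreal (indicator {0<..} r * r powr (\<mu>-1) * \<bar>1-r\<bar> powr q) \<partial>lborel)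
     \<le> (\<integral>\<^sup>+r. (ennreal ((1/2) powr q) * ?A r + ennreal ((1/2) powr (\<mu>-1)) * ?B (1 - r)) + ennreal ((1/2) powr q) * ?C r \<partial>lborel)"
    apply (rule nn_integral_mono)
    apply (subst ennreal_mult[symmetric], simp, simp add: indicator_def)+
    apply (subst ennreal_plus[symmetric], simp add: indicator_def, simp add: indicator_def)+
    apply (rule ennreal_leI)
    using Dfin_pw[of \<mu> q] assms by simp
  also have "\<dots> = ennreal ((1/2) powr q) * (\<integral>\<^sup>+r. ?A r \<partial>lborel) + ennreal ((1/2) powr (\<mu>-1)) * (\<integral>\<^sup>+r. ?B (1 - r) \<partial>lborel) + ennreal ((1/2) powr q) * (\<integral>\<^sup>+r. ?C r \<partial>lborel)"
    by (simp add: nn_integral_add nn_integral_cmult)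
  also have "(\<integral>\<^sup>+r. ?B (1 - r) \<partial>lborel) = (\<integral>\<^sup>+r. ?B r \<partial>lborel)"
    by (rule reflect_nn[where f = ?B]) measurable
  also have "(\<integral>\<^sup>+r. ?A r \<partial>lborel) = ennreal ((1/2) powr (\<mu>-1+1) / (\<mu>-1+1))"
    by (rule powr_from0_nn) (use assms in auto)
  also have "(\<integral>\<^sup>+r. ?C r \<partial>lborel) = ennreal (-(2 powr (\<mu>-1+q+1)) / (\<mu>-1+q+1))"
    by (rule powr_toinf_nn) (use assms in auto)
  finally have le: "(\<integral>\<^sup>+r. ennreal (indicator {0<..} r * r powr (\<mu>-1) * \<bar>1-r\<bar> powr q) \<partial>lborel)
     \<le> ennreal ((1/2) powr q) * ennreal ((1/2) powr (\<mu>-1+1) / (\<mu>-1+1)) + ennreal ((1/2) powr (\<mu>-1)) * (\<integral>\<^sup>+r. ?B r \<partial>lborel) + ennreal ((1/2) powr q) * ennreal (-(2 powr (\<mu>-1+q+1)) / (\<mu>-1+q+1))" .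
  have B: "(\<integral>\<^sup>+r. ?B r \<partial>lborel) < \<infinity>"
    using sym_fin[of q 1] assms by (simp add: le_less_trans)
  show ?thesis
    by (rule le_less_trans[OF le]) (use B in \<open>simp add: ennreal_mult_less_top\<close>)
qed

definition Dc :: "real \<Rightarrow> real \<Rightarrow> ennreal" where
  "Dc \<mu> q = (\<integral>\<^sup>+r. ennreal (indicator {0<..} r * r powr (\<mu>-1) * \<bar>1-r\<bar> powr q) \<partial>lborel)"

lemma scale_nn:
  fixes \<mu> q x :: real
  assumes "0 < x"
  shows "(\<integral>\<^sup>+s. ennreal (indicator {0<..} s * s powr (\<mu>-1) * \<bar>x - s\<bar> powr q) \<partial>lborel) = ennreal (x powr (\<mu>+q)) * Dc \<mu> q"
proof -
  have "(\<integral>\<^sup>+s. ennreal (indicator {0<..} s * s powr (\<mu>-1) * \<bar>x - s\<bar> powr q) \<partial>lborel)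
      = ennreal \<bar>x\<bar> * (\<integral>\<^sup>+r. ennreal (indicator {0<..} (0 + x*r) * (0 + x*r) powr (\<mu>-1) * \<bar>x - (0 + x*r)\<bar> powr q) \<partial>lborel)"
    by (rule nn_integral_real_affine[where f="\<lambda>s. ennreal (indicator {0<..} s * s powr (\<mu>-1) * \<bar>x - s\<bar> powr q)"]) (use assms in auto)
  also have "(\<integral>\<^sup>+r. ennreal (indicator {0<..} (0 + x*r) * (0 + x*r) powr (\<mu>-1) * \<bar>x - (0 + x*r)\<bar> powr q) \<partial>lborel)
     = (\<integral>\<^sup>+r. ennreal (x powr (\<mu>-1+q)) * ennreal (indicator {0<..} r * r powr (\<mu>-1) * \<bar>1-r\<bar> powr q) \<partial>lborel)"
  proof (rule nn_integral_cong)
    fix r :: real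
    show "ennreal (indicator {0<..} (0 + x*r) * (0 + x*r) powr (\<mu>-1) * \<bar>x - (0 + x*r)\<bar> powr q)
      = ennreal (x powr (\<mu>-1+q)) * ennreal (indicator {0<..} r * r powr (\<mu>-1) * \<bar>1-r\<bar> powr q)"
    proof (cases "r > 0")
      case False
      then have "\<not> 0 < x * r" using assms by (simp add: zero_less_mult_iff)
      then show ?thesis using False by (simp add: indicator_def)
    next
      case True
      have xr: "0 < x * r" using True assms by simp
      have "x - x*r = x*(1-r)" by (simp add: algebra_simps)
      then have e1: "\<bar>x - x*r\<bar> = x * \<bar>1 - r\<bar>" using assms by (simp add: abs_mult)
      have "(x*r) powr (\<mu>-1) * \<bar>x - x*r\<bar> powr q = x powr (\<mu>-1+q) * (r powr (\<mu>-1) * \<bar>1-r\<bar> powr q)"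
        unfolding e1 using assms True by (simp add: powr_mult powr_add)
      then show ?thesis using xr True
        by (simp add: indicator_def ennreal_mult[symmetric])
    qed
  qed
  also have "\<dots> = ennreal (x powr (\<mu>-1+q)) * Dc \<mu> q"
    unfolding Dc_def by (rule nn_integral_cmult) measurable
  finally show ?thesis using assms
    by (simp add: mult.assoc[symmetric] ennreal_mult[symmetric] powr_add[symmetric] powr_mult_base)
qed

definition Pbd :: "real \<Rightarrow> real \<Rightarrow> real \<Rightarrow> real \<Rightarrow> real \<Rightarrow> real \<Rightarrow> real" where
  "Pbd T q \<mu> t u1 u2 = indicator {0..t} u1 * indicator {0..t} u2 * (T-u1) powr (\<mu>-1) * (T-u2) powr (\<mu>-1) * \<bar>u1-u2\<bar> powr q"

lemma NA_pw:
  fixes T q \<mu> t u1 :: real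
  assumes "t \<le> T"
  shows "(\<integral>\<^sup>+u2. ennreal (Pbd T q \<mu> t u1 u2) \<partial>lborel) \<le> Dc \<mu> q * ennreal (indicator {0..t} u1 * (T-u1) powr (2*\<mu>-1+q))"
proof (cases "0 \<le> u1 \<and> u1 \<le> t \<and> u1 < T")
  case False
  then have "Pbd T q \<mu> t u1 u2 = 0" for u2
    using assms by (auto simp: Pbd_def indicator_def)
  then show ?thesis by simp
next
  case True
  define x1 where "x1 = T - u1"
  have x1: "0 < x1" using True x1_def by simp
  have eq: "Pbd T q \<mu> t u1 u2 = x1 powr (\<mu>-1) * (indicator {0..t} u2 * (T-u2) powr (\<mu>-1) * \<bar>u1-u2\<bar> powr q)" for u2
    using True by (simp add: Pbd_def x1_def indicator_def)
  have "(\<integral>\<^sup>+u2. ennreal (Pbd T q \<mu> t u1 u2) \<partial>lborel)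
      = (\<integral>\<^sup>+u2. ennreal (x1 powr (\<mu>-1)) * ennreal (indicator {0..t} u2 * (T-u2) powr (\<mu>-1) * \<bar>u1-u2\<bar> powr q) \<partial>lborel)"
    by (rule nn_integral_cong) (simp add: eq ennreal_mult')
  also have "\<dots> = ennreal (x1 powr (\<mu>-1)) * (\<integral>\<^sup>+u2. ennreal (indicator {0..t} u2 * (T-u2) powr (\<mu>-1) * \<bar>u1-u2\<bar> powr q) \<partial>lborel)"
    by (rule nn_integral_cmult) measurable
  finally have E1: "(\<integral>\<^sup>+u2. ennreal (Pbd T q \<mu> t u1 u2) \<partial>lborel) = ennreal (x1 powr (\<mu>-1)) * (\<integral>\<^sup>+u2. ennreal (indicator {0..t} u2 * (T-u2) powr (\<mu>-1) * \<bar>u1-u2\<bar> powr q) \<partial>lborel)" .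
  have "(\<integral>\<^sup>+u2. ennreal (indicator {0..t} u2 * (T-u2) powr (\<mu>-1) * \<bar>u1-u2\<bar> powr q) \<partial>lborel)
      \<le> (\<integral>\<^sup>+u2. ennreal (indicator {0<..} (T-u2) * (T-u2) powr (\<mu>-1) * \<bar>x1 - (T-u2)\<bar> powr q) \<partial>lborel)"
  proof (rule nn_integral_mono)
    fix u2 :: real
    have a: "\<bar>x1 - (T-u2)\<bar> = \<bar>u1-u2\<bar>" unfolding x1_def by simp
    have "indicator {0..t} u2 * (T-u2) powr (\<mu>-1) \<le> indicator {0<..} (T-u2) * (T-u2) powr (\<mu>-1)"
    proof (cases "u2 = T")
      case True then show ?thesis by (simp add: indicator_def)
    next
      case False then show ?thesis using assms by (simp add: indicator_def)
    qed
    then have "indicator {0..t} u2 * (T-u2) powr (\<mu>-1) * \<bar>u1-u2\<bar> powr q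
       \<le> indicator {0<..} (T-u2) * (T-u2) powr (\<mu>-1) * \<bar>x1 - (T-u2)\<bar> powr q"
      unfolding a by (rule mult_right_mono) simp
    then show "ennreal (indicator {0..t} u2 * (T-u2) powr (\<mu>-1) * \<bar>u1-u2\<bar> powr q)
      \<le> ennreal (indicator {0<..} (T-u2) * (T-u2) powr (\<mu>-1) * \<bar>x1 - (T-u2)\<bar> powr q)"
      by (rule ennreal_leI)
  qed
  also have "(\<integral>\<^sup>+u2. ennreal (indicator {0<..} (T-u2) * (T-u2) powr (\<mu>-1) * \<bar>x1 - (T-u2)\<bar> powr q) \<partial>lborel)
     = (\<integral>\<^sup>+s. ennreal (indicator {0<..} s * s powr (\<mu>-1) * \<bar>x1 - s\<bar> powr q) \<partial>lborel)"
    by (rule reflect_nn[where f="\<lambda>s. ennreal (indicator {0<..} s * s powr (\<mu>-1) * \<bar>x1 - s\<bar> powr q)"]) measurable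
  also have "\<dots> = ennreal (x1 powr (\<mu>+q)) * Dc \<mu> q"
    by (rule scale_nn[OF x1])
  finally have E2: "(\<integral>\<^sup>+u2. ennreal (indicator {0..t} u2 * (T-u2) powr (\<mu>-1) * \<bar>u1-u2\<bar> powr q) \<partial>lborel) \<le> ennreal (x1 powr (\<mu>+q)) * Dc \<mu> q" .
  have "(\<integral>\<^sup>+u2. ennreal (Pbd T q \<mu> t u1 u2) \<partial>lborel) \<le> ennreal (x1 powr (\<mu>-1)) * (ennreal (x1 powr (\<mu>+q)) * Dc \<mu> q)"
    unfolding E1 by (rule mult_left_mono[OF E2]) simp
  also have "\<dots> = Dc \<mu> q * ennreal (x1 powr (2*\<mu>-1+q))"
  proof -
    have "x1 powr (\<mu>-1) * x1 powr (\<mu>+q) = x1 powr ((\<mu>-1) + (\<mu>+q))"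
      by (simp only: powr_add)
    also have "(\<mu>-1) + (\<mu>+q) = 2*\<mu>-1+q" by simp
    finally have "x1 powr (\<mu>-1) * x1 powr (\<mu>+q) = x1 powr (2*\<mu>-1+q)" .
    then have "ennreal (x1 powr (\<mu>-1)) * ennreal (x1 powr (\<mu>+q)) = ennreal (x1 powr (2*\<mu>-1+q))"
      by (simp add: ennreal_mult'[symmetric])
    then show ?thesis
      by (metis mult.assoc mult.commute)
  qed
  also have "\<dots> = Dc \<mu> q * ennreal (indicator {0..t} u1 * (T-u1) powr (2*\<mu>-1+q))"
    using True by (simp add: x1_def)
  finally show ?thesis .
qed

lemma NA_bound:
  fixes T q \<mu> t :: real
  assumes "t \<le> T"
  shows "(\<integral>\<^sup>+u1. \<integral>\<^sup>+u2. ennreal (Pbd T q \<mu> t u1 u2) \<partial>lborel \<partial>lborel)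
     \<le> Dc \<mu> q * (\<integral>\<^sup>+x. ennreal (indicator {T-t..T} x * x powr (2*\<mu>-1+q)) \<partial>lborel)"
proof -
  have "(\<integral>\<^sup>+u1. \<integral>\<^sup>+u2. ennreal (Pbd T q \<mu> t u1 u2) \<partial>lborel \<partial>lborel)
     \<le> (\<integral>\<^sup>+u1. Dc \<mu> q * ennreal (indicator {0..t} u1 * (T-u1) powr (2*\<mu>-1+q)) \<partial>lborel)"
    by (rule nn_integral_mono) (rule NA_pw[OF assms])
  also have "\<dots> = Dc \<mu> q * (\<integral>\<^sup>+u1. ennreal (indicator {0..t} u1 * (T-u1) powr (2*\<mu>-1+q)) \<partial>lborel)"
    by (rule nn_integral_cmult) measurable
  also have "(\<integral>\<^sup>+u1. ennreal (indicator {0..t} u1 * (T-u1) powr (2*\<mu>-1+q)) \<partial>lborel)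
     = (\<integral>\<^sup>+u1. ennreal (indicator {T-t..T} (T-u1) * (T-u1) powr (2*\<mu>-1+q)) \<partial>lborel)"
    by (rule nn_integral_cong) (auto simp: indicator_def)
  also have "\<dots> = (\<integral>\<^sup>+x. ennreal (indicator {T-t..T} x * x powr (2*\<mu>-1+q)) \<partial>lborel)"
    by (rule reflect_nn[where f="\<lambda>x. ennreal (indicator {T-t..T} x * x powr (2*\<mu>-1+q))"]) measurable
  finally show ?thesis .
qed

definition Qbd :: "real \<Rightarrow> real \<Rightarrow> real \<Rightarrow> real \<Rightarrow> real \<Rightarrow> real" where
  "Qbd T q \<mu> v1 v2 = indicator {0..T} v1 * indicator {0..T} v2 * (T-v1) powr (-\<mu>) * (T-v2) powr (-\<mu>) * \<bar>v1-v2\<bar> powr q"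

lemma kernel_unif:
  fixes T q v1 :: real
  assumes "0 \<le> T" "-1 < q"
  shows "(\<integral>\<^sup>+v2. ennreal (indicator {0..T} v1 * indicator {0..T} v2 * \<bar>v1-v2\<bar> powr q) \<partial>lborel) \<le> ennreal (2 * (T powr (q+1) / (q+1)))"
proof -
  have "(\<integral>\<^sup>+v2. ennreal (indicator {0..T} v1 * indicator {0..T} v2 * \<bar>v1-v2\<bar> powr q) \<partial>lborel)
     \<le> (\<integral>\<^sup>+v2. ennreal (indicator {-T..T} (v1 - v2) * \<bar>v1 - v2\<bar> powr q) \<partial>lborel)"
    by (rule nn_integral_mono) (auto simp: indicator_def)
  also have "\<dots> = (\<integral>\<^sup>+s. ennreal (indicator {-T..T} s * \<bar>s\<bar> powr q) \<partial>lborel)"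
    by (rule reflect_nn[where f="\<lambda>s. ennreal (indicator {-T..T} s * \<bar>s\<bar> powr q)"]) measurable
  also have "\<dots> \<le> ennreal (2 * (T powr (q+1) / (q+1)))"
    by (rule sym_fin) (use assms in auto)
  finally show ?thesis .
qed

lemma amgm_powr:
  fixes A B m :: real
  shows "A powr (-m) * B powr (-m) \<le> A powr (-2*m) + B powr (-2*m)"
proof -
  have "A powr (-2*m) = A powr (-m) * A powr (-m)" "B powr (-2*m) = B powr (-m) * B powr (-m)"
    by (simp_all add: powr_add[symmetric])
  moreover have "a * b \<le> a*a + b*b" if "0 \<le> a" "0 \<le> b" for a b :: real
  proof -
    have "0 \<le> (a-b)^2" by simp
    then have "2*a*b \<le> a*a + b*b" by (simp add: power2_eq_square algebra_simps)
    moreover have "0 \<le> a*b" using that by simp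
    ultimately show ?thesis by linarith
  qed
  ultimately show ?thesis by simp
qed

lemma NB_fin:
  fixes T q \<mu> :: real
  assumes "0 < T" "0 < \<mu>" "\<mu> < 1/2" "-1 < q"
  shows "(\<integral>\<^sup>+v1. \<integral>\<^sup>+v2. ennreal (Qbd T q \<mu> v1 v2) \<partial>lborel \<partial>lborel) < \<infinity>"
proof -
  define R where "R v = indicator {0..T} v * (T-v) powr (-2*\<mu>)" for v :: real
  define S where "S v1 v2 = indicator {0..T} v1 * indicator {0..T} v2 * \<bar>v1-v2\<bar> powr q" for v1 v2 :: real
  define K where "K = 2 * (T powr (q+1) / (q+1))"
  have R0: "0 \<le> R v" for v by (simp add: R_def)
  have S0: "0 \<le> S v1 v2" for v1 v2 by (simp add: S_def)
  have [measurable]: "R \<in> borel_measurable borel" unfolding R_def by measurable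
  have [measurable]: "case_prod S \<in> borel_measurable (lborel \<Otimes>\<^sub>M lborel)" unfolding S_def by measurable
  have Sunif: "(\<integral>\<^sup>+v2. ennreal (S v1 v2) \<partial>lborel) \<le> ennreal K" for v1
    unfolding S_def K_def by (rule kernel_unif) (use assms in auto)
  have Sunif2: "(\<integral>\<^sup>+v1. ennreal (S v1 v2) \<partial>lborel) \<le> ennreal K" for v2
  proof -
    have "S v1 v2 = S v2 v1" for v1
    proof -
      have "\<bar>v1-v2\<bar> = \<bar>v2-v1\<bar>" by simp
      then show ?thesis unfolding S_def by (simp add: mult_ac)
    qed
    then show ?thesis using Sunif[of v2] by simp
  qed
  have Rint: "(\<integral>\<^sup>+v. ennreal (R v) \<partial>lborel) < \<infinity>"
  proof -
    have "(\<integral>\<^sup>+v. ennreal (R v) \<partial>lborel) = (\<integral>\<^sup>+v. ennreal (indicator {0..T} (T - v) * (T-v) powr (-2*\<mu>)) \<partial>lborel)"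
      unfolding R_def by (rule nn_integral_cong) (auto simp: indicator_def)
    also have "\<dots> = (\<integral>\<^sup>+y. ennreal (indicator {0..T} y * y powr (-2*\<mu>)) \<partial>lborel)"
      by (rule reflect_nn[where f="\<lambda>y. ennreal (indicator {0..T} y * y powr (-2*\<mu>))"]) measurable
    also have "\<dots> = ennreal (T powr (-2*\<mu>+1) / (-2*\<mu>+1))"
      by (rule powr_from0_nn) (use assms in auto)
    finally show ?thesis by simp
  qed
  have pw: "ennreal (Qbd T q \<mu> v1 v2) \<le> ennreal (R v1 * S v1 v2) + ennreal (R v2 * S v1 v2)" for v1 v2
  proof -
    have "(T-v1) powr (-\<mu>) * (T-v2) powr (-\<mu>) \<le> (T-v1) powr (-2*\<mu>) + (T-v2) powr (-2*\<mu>)"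
      by (rule amgm_powr)
    then have "(T-v1) powr (-\<mu>) * (T-v2) powr (-\<mu>) * \<bar>v1-v2\<bar> powr q \<le> ((T-v1) powr (-2*\<mu>) + (T-v2) powr (-2*\<mu>)) * \<bar>v1-v2\<bar> powr q"
      by (rule mult_right_mono) simp
    then have "Qbd T q \<mu> v1 v2 \<le> R v1 * S v1 v2 + R v2 * S v1 v2"
      unfolding Qbd_def R_def S_def
      by (auto simp: indicator_def algebra_simps)
    then show ?thesis
      by (simp add: ennreal_plus[symmetric] R0 S0 del: ennreal_plus)
  qed
  have "(\<integral>\<^sup>+v1. \<integral>\<^sup>+v2. ennreal (Qbd T q \<mu> v1 v2) \<partial>lborel \<partial>lborel)
     \<le> (\<integral>\<^sup>+v1. (\<integral>\<^sup>+v2. ennreal (R v1 * S v1 v2) \<partial>lborel) + (\<integral>\<^sup>+v2. ennreal (R v2 * S v1 v2) \<partial>lborel) \<partial>lborel)"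
    apply (rule nn_integral_mono)
    apply (subst nn_integral_add[symmetric])
      apply measurable
    by (rule nn_integral_mono) (rule pw)
  also have "\<dots> = (\<integral>\<^sup>+v1. \<integral>\<^sup>+v2. ennreal (R v1 * S v1 v2) \<partial>lborel \<partial>lborel) + (\<integral>\<^sup>+v1. \<integral>\<^sup>+v2. ennreal (R v2 * S v1 v2) \<partial>lborel \<partial>lborel)"
    by (rule nn_integral_add) measurable
  also have "(\<integral>\<^sup>+v1. \<integral>\<^sup>+v2. ennreal (R v2 * S v1 v2) \<partial>lborel \<partial>lborel) = (\<integral>\<^sup>+v2. \<integral>\<^sup>+v1. ennreal (R v2 * S v1 v2) \<partial>lborel \<partial>lborel)"
    by (rule lborel_pair.Fubini'[where f="\<lambda>x y. ennreal (R x * S y x)"]) measurable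
  also have "(\<integral>\<^sup>+v1. \<integral>\<^sup>+v2. ennreal (R v1 * S v1 v2) \<partial>lborel \<partial>lborel) \<le> (\<integral>\<^sup>+v1. ennreal (R v1) * ennreal K \<partial>lborel)"
  proof (rule nn_integral_mono)
    fix v1
    have "(\<integral>\<^sup>+v2. ennreal (R v1 * S v1 v2) \<partial>lborel) = ennreal (R v1) * (\<integral>\<^sup>+v2. ennreal (S v1 v2) \<partial>lborel)"
      by (simp add: ennreal_mult' R0 nn_integral_cmult)
    also have "\<dots> \<le> ennreal (R v1) * ennreal K"
      by (rule mult_left_mono[OF Sunif]) simp
    finally show "(\<integral>\<^sup>+v2. ennreal (R v1 * S v1 v2) \<partial>lborel) \<le> ennreal (R v1) * ennreal K" .
  qed
  also have "(\<integral>\<^sup>+v2. \<integral>\<^sup>+v1. ennreal (R v2 * S v1 v2) \<partial>lborel \<partial>lborel) \<le> (\<integral>\<^sup>+v2. ennreal (R v2) * ennreal K \<partial>lborel)"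
  proof (rule nn_integral_mono)
    fix v2
    have "(\<integral>\<^sup>+v1. ennreal (R v2 * S v1 v2) \<partial>lborel) = ennreal (R v2) * (\<integral>\<^sup>+v1. ennreal (S v1 v2) \<partial>lborel)"
      by (simp add: ennreal_mult' R0 nn_integral_cmult)
    also have "\<dots> \<le> ennreal (R v2) * ennreal K"
      by (rule mult_left_mono[OF Sunif2]) simp
    finally show "(\<integral>\<^sup>+v1. ennreal (R v2 * S v1 v2) \<partial>lborel) \<le> ennreal (R v2) * ennreal K" .
  qed
  also have "(\<integral>\<^sup>+v. ennreal (R v) * ennreal K \<partial>lborel) = (\<integral>\<^sup>+v. ennreal (R v) \<partial>lborel) * ennreal K"
    by (rule nn_integral_multc) measurable
  finally have le: "(\<integral>\<^sup>+v1. \<integral>\<^sup>+v2. ennreal (Qbd T q \<mu> v1 v2) \<partial>lborel \<partial>lborel) \<le> (\<integral>\<^sup>+v. ennreal (R v) \<partial>lborel) * ennreal K + (\<integral>\<^sup>+v. ennreal (R v) \<partial>lborel) * ennreal K"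
    by (simp add: add_mono)
  show ?thesis
    by (rule le_less_trans[OF le]) (use Rint in \<open>simp add: ennreal_mult_less_top\<close>)
qed

lemma powr_shift_le:
  fixes A B lam \<mu> :: real
  assumes "0 < A" "A \<le> B" "\<mu> \<le> lam"
  shows "A powr (lam-1) * B powr (-lam) \<le> A powr (\<mu>-1) * B powr (-\<mu>)"
proof -
  have B: "0 < B" using assms by simp
  have e1: "A powr (lam-1) = A powr (\<mu>-1) * A powr (lam-\<mu>)" by (simp add: powr_add[symmetric])
  have e2: "B powr (-\<mu>) = B powr (-lam) * B powr (lam-\<mu>)" by (simp add: powr_add[symmetric])
  have "A powr (lam-\<mu>) \<le> B powr (lam-\<mu>)" by (rule powr_mono2) (use assms in auto)
  then have "(A powr (\<mu>-1) * B powr (-lam)) * A powr (lam-\<mu>) \<le> (A powr (\<mu>-1) * B powr (-lam)) * B powr (lam-\<mu>)"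
    by (rule mult_left_mono) simp
  then show ?thesis unfolding e1 e2 by (simp add: mult_ac)
qed

lemma psi_norm:
  fixes T lam w \<mu> t u v :: real and \<alpha> :: complex
  assumes "t \<le> T" "0 < \<mu>" "\<mu> \<le> lam" "\<alpha> = complex_of_real lam - \<i> * complex_of_real w"
  shows "cmod (psi T \<alpha> t u v) \<le> indicator {0..t} u * indicator {0..T} v * (T-u) powr (\<mu>-1) * (T-v) powr (-\<mu>)"
proof (cases "0 \<le> v \<and> v \<le> u \<and> u \<le> t")
  case False
  then have "psi T \<alpha> t u v = 0" unfolding psi_def by (rule if_not_P)
  then show ?thesis by simp
next
  case True
  show ?thesis
  proof (cases "u = T")
    case True then show ?thesis by (simp add: psi_def)
  next
    case False
    have A: "0 < T - u" using True False assms by simp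
    have AB: "T - u \<le> T - v" using True by simp
    have B: "0 < T - v" using A AB by simp
    have "cmod (psi T \<alpha> t u v) = (T-u) powr (lam-1) * (T-v) powr (-lam)"
      using True A B assms by (simp add: psi_def norm_mult norm_powr_real_powr)
    also have "\<dots> \<le> (T-u) powr (\<mu>-1) * (T-v) powr (-\<mu>)"
      by (rule powr_shift_le[OF A AB assms(3)])
    finally show ?thesis using True assms by (simp add: indicator_def)
  qed
qed

lemma tensor_pw:
  fixes T lam w \<mu> t H :: real and \<alpha> :: complex and u1 u2 v1 v2 :: real
  assumes "t \<le> T" "0 < \<mu>" "\<mu> \<le> lam" "\<alpha> = complex_of_real lam - \<i> * complex_of_real w"
  shows "norm (tensor_integrand H (psi T \<alpha> t) (u1,u2,v1,v2))
     \<le> (H*(2*H-1))^2 * (Pbd T (2*H-2) \<mu> t u1 u2 * Qbd T (2*H-2) \<mu> v1 v2)"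
proof -
  let ?b = "\<lambda>u v. indicator {0..t} u * indicator {0..T} v * (T-u) powr (\<mu>-1) * (T-v) powr (-\<mu>)"
  let ?K = "\<bar>u1 - u2\<bar> powr (2 * H - 2) * \<bar>v1 - v2\<bar> powr (2 * H - 2)"
  have "norm (tensor_integrand H (psi T \<alpha> t) (u1,u2,v1,v2))
      = (H*(2*H-1))^2 * (cmod (psi T \<alpha> t u1 v1) * cmod (psi T \<alpha> t u2 v2)) * ?K"
    apply (simp only: tensor_integrand_def split norm_mult norm_of_real complex_mod_cnj)
    by (simp add: abs_mult)
  also have "\<dots> \<le> (H*(2*H-1))^2 * (?b u1 v1 * ?b u2 v2) * ?K"
    apply (rule mult_right_mono, rule mult_left_mono, rule mult_mono)
    using psi_norm[OF assms] by auto
  also have "\<dots> = (H*(2*H-1))^2 * (Pbd T (2*H-2) \<mu> t u1 u2 * Qbd T (2*H-2) \<mu> v1 v2)"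
    by (simp add: Pbd_def Qbd_def mult_ac)
  finally show ?thesis .
qed



lemma nn4:
  fixes G :: "real\<times>real\<times>real\<times>real \<Rightarrow> ennreal"
  assumes G: "G \<in> borel_measurable (lborel \<Otimes>\<^sub>M lborel \<Otimes>\<^sub>M lborel \<Otimes>\<^sub>M lborel)"
  shows "(\<integral>\<^sup>+z. G z \<partial>lborel) = (\<integral>\<^sup>+u1. \<integral>\<^sup>+u2. \<integral>\<^sup>+v1. \<integral>\<^sup>+v2. G (u1,u2,v1,v2) \<partial>lborel \<partial>lborel \<partial>lborel \<partial>lborel)"
proof -
  have G3: "(\<lambda>w. G (u1, w)) \<in> borel_measurable (lborel \<Otimes>\<^sub>M lborel \<Otimes>\<^sub>M lborel)" for u1
    using G by measurable
  have G2: "(\<lambda>w. G (u1, u2, w)) \<in> borel_measurable (lborel \<Otimes>\<^sub>M lborel)" for u1 u2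
    using G by measurable
  have "(\<integral>\<^sup>+z. G z \<partial>lborel) = (\<integral>\<^sup>+z. G z \<partial>(lborel \<Otimes>\<^sub>M (lborel::(real\<times>real\<times>real) measure)))"
    by (simp only: lborel_prod)
  also have "\<dots> = (\<integral>\<^sup>+u1. \<integral>\<^sup>+w. G (u1,w) \<partial>(lborel::(real\<times>real\<times>real) measure) \<partial>lborel)"
    by (rule lborel.nn_integral_fst[symmetric]) (use G in \<open>simp add: lborel_prod\<close>)
  also have "\<dots> = (\<integral>\<^sup>+u1. \<integral>\<^sup>+u2. \<integral>\<^sup>+w. G (u1,u2,w) \<partial>(lborel::(real\<times>real) measure) \<partial>lborel \<partial>lborel)"
    apply (rule nn_integral_cong)
    apply (subst lborel_prod[symmetric])
    by (rule lborel.nn_integral_fst[symmetric]) (use G3 in \<open>simp add: lborel_prod\<close>)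
  also have "\<dots> = (\<integral>\<^sup>+u1. \<integral>\<^sup>+u2. \<integral>\<^sup>+v1. \<integral>\<^sup>+v2. G (u1,u2,v1,v2) \<partial>lborel \<partial>lborel \<partial>lborel \<partial>lborel)"
    apply (rule nn_integral_cong, rule nn_integral_cong)
    apply (subst lborel_prod[symmetric])
    by (rule lborel.nn_integral_fst[symmetric]) (use G2 in \<open>simp add: lborel_prod\<close>)
  finally show ?thesis .
qed

lemma psi_alt:
  fixes T t :: real and \<alpha> :: complex
  assumes "t \<le> T"
  shows "psi T \<alpha> t = (\<lambda>u v. if 0 \<le> v \<and> v \<le> u \<and> u \<le> t \<and> u < T
     then exp ((cnj \<alpha> - 1) * complex_of_real (ln (T-u))) * exp (- cnj \<alpha> * complex_of_real (ln (T-v))) else 0)"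
proof (intro ext)
  fix u v :: real
  show "psi T \<alpha> t u v = (if 0 \<le> v \<and> v \<le> u \<and> u \<le> t \<and> u < T
     then exp ((cnj \<alpha> - 1) * complex_of_real (ln (T-u))) * exp (- cnj \<alpha> * complex_of_real (ln (T-v))) else 0)"
  proof (cases "0 \<le> v \<and> v \<le> u \<and> u \<le> t")
    case False then show ?thesis unfolding psi_def by auto
  next
    case True
    show ?thesis
    proof (cases "u = T")
      case True then show ?thesis unfolding psi_def by simp
    next
      case False
      then have "0 < T - u" "0 < T - v" using True assms by auto
      then show ?thesis using True False assms
        by (simp add: psi_def powr_def Ln_of_real[symmetric] mult.commute)
    qed
  qed
qed

lemma psi_meas:
  fixes T t :: real and \<alpha> :: complex
  assumes "t \<le> T"
  shows "(\<lambda>(u,v). psi T \<alpha> t u v) \<in> borel_measurable (lborel \<Otimes>\<^sub>M lborel)"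
  unfolding psi_alt[OF assms] by measurable

lemma psi_meas_comp:
  fixes T t :: real and \<alpha> :: complex
  assumes "t \<le> T" "f \<in> M \<rightarrow>\<^sub>M lborel" "g \<in> M \<rightarrow>\<^sub>M lborel"
  shows "(\<lambda>x. psi T \<alpha> t (f x) (g x)) \<in> borel_measurable M"
  using measurable_compose[OF measurable_Pair[OF assms(2,3)] psi_meas[OF assms(1)]] by simp

lemma cnj_meas: "(cnj :: complex \<Rightarrow> complex) \<in> borel_measurable borel"
  by (rule borel_measurable_continuous_onI) (intro continuous_intros)

lemma tensor_meas:
  fixes T t H :: real and \<alpha> :: complex
  assumes "t \<le> T"
  shows "tensor_integrand H (psi T \<alpha> t) \<in> borel_measurable lborel"
proof -
  note [measurable] = psi_meas_comp[OF assms] cnj_meas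
  have [measurable]: "(\<lambda>(u1::real,u2::real,v1::real,v2::real). \<bar>u1 - u2\<bar> powr (2 * H - 2) * \<bar>v1 - v2\<bar> powr (2 * H - 2)) \<in> borel_measurable (lborel \<Otimes>\<^sub>M lborel \<Otimes>\<^sub>M lborel \<Otimes>\<^sub>M lborel)"
    by measurable
  have "tensor_integrand H (psi T \<alpha> t) \<in> borel_measurable (lborel \<Otimes>\<^sub>M lborel \<Otimes>\<^sub>M lborel \<Otimes>\<^sub>M lborel)"
    unfolding tensor_integrand_def by measurable
  then show ?thesis by (simp add: lborel_prod)
qed

lemma Pbd_meas[measurable]:
  assumes "f \<in> borel_measurable M" "g \<in> borel_measurable M"
  shows "(\<lambda>x. Pbd T q \<mu> t (f x) (g x)) \<in> borel_measurable M"
  unfolding Pbd_def using assms by measurable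

lemma Qbd_meas[measurable]:
  assumes "f \<in> borel_measurable M" "g \<in> borel_measurable M"
  shows "(\<lambda>x. Qbd T q \<mu> (f x) (g x)) \<in> borel_measurable M"
  unfolding Qbd_def using assms by measurable

lemma Pbd_nonneg: "0 \<le> Pbd T q \<mu> t u1 u2" by (simp add: Pbd_def)
lemma Qbd_nonneg: "0 \<le> Qbd T q \<mu> v1 v2" by (simp add: Qbd_def)

lemma Pbd_mono: "t \<le> T \<Longrightarrow> Pbd T q \<mu> t u1 u2 \<le> Pbd T q \<mu> T u1 u2"
  by (auto simp: Pbd_def indicator_def)

definition Gbd :: "real \<Rightarrow> real \<Rightarrow> real \<Rightarrow> real \<Rightarrow> real \<times> real \<times> real \<times> real \<Rightarrow> real" where
  "Gbd H T \<mu> t z = (H*(2*H-1))^2 * (Pbd T (2*H-2) \<mu> t (fst z) (fst (snd z)) * Qbd T (2*H-2) \<mu> (fst (snd (snd z))) (snd (snd (snd z))))"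

lemma Gbd_meas: "Gbd H T \<mu> t \<in> borel_measurable lborel"
proof -
  have "Gbd H T \<mu> t \<in> borel_measurable (lborel \<Otimes>\<^sub>M lborel \<Otimes>\<^sub>M lborel \<Otimes>\<^sub>M lborel)"
    unfolding Gbd_def by measurable
  then show ?thesis by (simp add: lborel_prod)
qed

lemma Gbd_int:
  fixes H T \<mu> t :: real
  shows "(\<integral>\<^sup>+z. ennreal (Gbd H T \<mu> t z) \<partial>lborel)
    = ennreal ((H*(2*H-1))^2) * (\<integral>\<^sup>+u1. \<integral>\<^sup>+u2. ennreal (Pbd T (2*H-2) \<mu> t u1 u2) \<partial>lborel \<partial>lborel)
      * (\<integral>\<^sup>+v1. \<integral>\<^sup>+v2. ennreal (Qbd T (2*H-2) \<mu> v1 v2) \<partial>lborel \<partial>lborel)"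
proof -
  let ?c = "(H*(2*H-1))^2"
  let ?P = "Pbd T (2*H-2) \<mu> t"
  let ?Q = "Qbd T (2*H-2) \<mu>"
  let ?NB = "(\<integral>\<^sup>+v1. \<integral>\<^sup>+v2. ennreal (?Q v1 v2) \<partial>lborel \<partial>lborel)"
  have m: "(\<lambda>z. ennreal (Gbd H T \<mu> t z)) \<in> borel_measurable (lborel \<Otimes>\<^sub>M lborel \<Otimes>\<^sub>M lborel \<Otimes>\<^sub>M lborel)"
    unfolding Gbd_def by measurable
  have "(\<integral>\<^sup>+z. ennreal (Gbd H T \<mu> t z) \<partial>lborel)
     = (\<integral>\<^sup>+u1. \<integral>\<^sup>+u2. \<integral>\<^sup>+v1. \<integral>\<^sup>+v2. ennreal (Gbd H T \<mu> t (u1,u2,v1,v2)) \<partial>lborel \<partial>lborel \<partial>lborel \<partial>lborel)"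
    by (rule nn4[OF m])
  also have "\<dots> = (\<integral>\<^sup>+u1. \<integral>\<^sup>+u2. ennreal (?c * ?P u1 u2) * ?NB \<partial>lborel \<partial>lborel)"
  proof (intro nn_integral_cong)
    fix u1 u2 :: real
    have "(\<integral>\<^sup>+v1. \<integral>\<^sup>+v2. ennreal (Gbd H T \<mu> t (u1,u2,v1,v2)) \<partial>lborel \<partial>lborel)
       = (\<integral>\<^sup>+v1. \<integral>\<^sup>+v2. ennreal (?c * ?P u1 u2) * ennreal (?Q v1 v2) \<partial>lborel \<partial>lborel)"
      by (intro nn_integral_cong) (simp add: Gbd_def ennreal_mult' Pbd_nonneg mult.assoc)
    also have "\<dots> = (\<integral>\<^sup>+v1. ennreal (?c * ?P u1 u2) * (\<integral>\<^sup>+v2. ennreal (?Q v1 v2) \<partial>lborel) \<partial>lborel)"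
      by (intro nn_integral_cong nn_integral_cmult) measurable
    also have "\<dots> = ennreal (?c * ?P u1 u2) * ?NB"
      by (rule nn_integral_cmult) measurable
    finally show "(\<integral>\<^sup>+v1. \<integral>\<^sup>+v2. ennreal (Gbd H T \<mu> t (u1,u2,v1,v2)) \<partial>lborel \<partial>lborel) = ennreal (?c * ?P u1 u2) * ?NB" .
  qed
  also have "\<dots> = (\<integral>\<^sup>+u1. (\<integral>\<^sup>+u2. ennreal (?c * ?P u1 u2) \<partial>lborel) * ?NB \<partial>lborel)"
    by (intro nn_integral_cong nn_integral_multc) measurable
  also have "\<dots> = (\<integral>\<^sup>+u1. \<integral>\<^sup>+u2. ennreal (?c * ?P u1 u2) \<partial>lborel \<partial>lborel) * ?NB"
    by (rule nn_integral_multc) measurable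
  also have "(\<integral>\<^sup>+u1. \<integral>\<^sup>+u2. ennreal (?c * ?P u1 u2) \<partial>lborel \<partial>lborel) = (\<integral>\<^sup>+u1. ennreal ?c * (\<integral>\<^sup>+u2. ennreal (?P u1 u2) \<partial>lborel) \<partial>lborel)"
    by (intro nn_integral_cong) (simp add: ennreal_mult' nn_integral_cmult)
  also have "\<dots> = ennreal ?c * (\<integral>\<^sup>+u1. \<integral>\<^sup>+u2. ennreal (?P u1 u2) \<partial>lborel \<partial>lborel)"
    by (rule nn_integral_cmult) measurable
  finally show ?thesis by (simp add: mult.assoc)
qed

definition Ef :: "real \<Rightarrow> real \<Rightarrow> real \<Rightarrow> real \<Rightarrow> ennreal" where
  "Ef T \<mu> q t = (\<integral>\<^sup>+x. ennreal (indicator {T-t..T} x * x powr (2*\<mu>-1+q)) \<partial>lborel)"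

lemma E_neg:
  assumes "2*\<mu>+q < 0" "t < T"
  shows "Ef T \<mu> q t \<le> ennreal ((T-t) powr (2*\<mu>+q) / (-(2*\<mu>+q)))"
proof -
  have "Ef T \<mu> q t \<le> (\<integral>\<^sup>+x. ennreal (indicator {T-t..} x * x powr (2*\<mu>-1+q)) \<partial>lborel)"
    unfolding Ef_def by (rule nn_integral_mono) (auto simp: indicator_def)
  also have "\<dots> = ennreal (-((T-t) powr (2*\<mu>-1+q+1)) / (2*\<mu>-1+q+1))"
    by (rule powr_toinf_nn) (use assms in auto)
  also have "-((T-t) powr (2*\<mu>-1+q+1)) / (2*\<mu>-1+q+1) = (T-t) powr (2*\<mu>+q) / (-(2*\<mu>+q))"
  proof -
    have e: "2*\<mu>-1+q+1 = 2*\<mu>+q" by simp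
    show ?thesis by (simp only: e minus_divide_left[symmetric] divide_minus_right[symmetric])
  qed
  finally show ?thesis .
qed

lemma E_pos:
  assumes "0 < 2*\<mu>+q" "t \<le> T" "0 \<le> T"
  shows "Ef T \<mu> q t \<le> ennreal (T powr (2*\<mu>+q) / (2*\<mu>+q))"
proof -
  have "Ef T \<mu> q t \<le> (\<integral>\<^sup>+x. ennreal (indicator {0..T} x * x powr (2*\<mu>-1+q)) \<partial>lborel)"
    unfolding Ef_def by (rule nn_integral_mono) (use assms in \<open>auto simp: indicator_def\<close>)
  also have "\<dots> = ennreal (T powr (2*\<mu>-1+q+1) / (2*\<mu>-1+q+1))"
    by (rule powr_from0_nn) (use assms in auto)
  finally show ?thesis by simp
qed

lemma E_zero:
  assumes "2*\<mu>+q = 0" "0 < T - t" "T - t \<le> T"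
  shows "Ef T \<mu> q t \<le> ennreal (ln T - ln (T-t))"
proof -
  have ex: "2*\<mu>-1+q = -1" using assms by simp
  have "Ef T \<mu> q t = (\<integral>\<^sup>+x. ennreal (indicator {T-t..T} x * (1/x)) \<partial>lborel)"
    unfolding Ef_def ex
    by (rule nn_integral_cong) (use assms in \<open>auto simp: indicator_def\<close>)
  also have "\<dots> = ennreal (ln T - ln (T-t))"
  proof (rule nn_integral_has_integral_lebesgue)
    show "\<And>x. x \<in> {T - t..T} \<Longrightarrow> 0 \<le> 1 / x" using assms by auto
    show "((\<lambda>x. 1/x) has_integral ln T - ln (T - t)) {T - t..T}"
    proof (rule fundamental_theorem_of_calculus)
      show "T - t \<le> T" by fact
      fix x assume x: "x \<in> {T-t..T}"
      then have "0 < x" using assms by auto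
      then have "(ln has_real_derivative 1/x) (at x within {T-t..T})"
        by (auto intro!: derivative_eq_intros)
      then show "(ln has_vector_derivative 1/x) (at x within {T-t..T})"
        by (simp add: has_real_derivative_iff_has_vector_derivative)
    qed
  qed
  finally show ?thesis by simp
qed

lemma cube_sets: "cube4 T \<in> sets lborel"
proof -
  have "closed (cube4 T)" unfolding cube4_def by (intro closed_Times) auto
  then show ?thesis by simp
qed

lemma F_pw:
  fixes H T lam w \<mu> t :: real and \<alpha> :: complex
  assumes "t \<le> T" "0 < \<mu>" "\<mu> \<le> lam"
    and al: "\<alpha> = complex_of_real lam - \<i> * complex_of_real w"
  shows "norm (indicator (cube4 T) z *\<^sub>R tensor_integrand H (psi T \<alpha> t) z) \<le> Gbd H T \<mu> t z"
proof -
  obtain u1 u2 v1 v2 where z: "z = (u1,u2,v1,v2)" by (cases z) auto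
  have "norm (indicator (cube4 T) z *\<^sub>R tensor_integrand H (psi T \<alpha> t) z) \<le> norm (tensor_integrand H (psi T \<alpha> t) z)"
    by (auto simp: indicator_def)
  also have "\<dots> \<le> Gbd H T \<mu> t z"
    unfolding z Gbd_def using tensor_pw[OF assms] by simp
  finally show ?thesis .
qed

lemma Gbd_le:
  fixes H T \<mu> t :: real
  assumes "t \<le> T"
  shows "(\<integral>\<^sup>+z. ennreal (Gbd H T \<mu> t z) \<partial>lborel)
     \<le> ennreal ((H*(2*H-1))^2) * (Dc \<mu> (2*H-2) * Ef T \<mu> (2*H-2) t) * (\<integral>\<^sup>+v1. \<integral>\<^sup>+v2. ennreal (Qbd T (2*H-2) \<mu> v1 v2) \<partial>lborel \<partial>lborel)"
proof -
  have "(\<integral>\<^sup>+z. ennreal (Gbd H T \<mu> t z) \<partial>lborel) = ennreal ((H*(2*H-1))^2) * (\<integral>\<^sup>+u1. \<integral>\<^sup>+u2. ennreal (Pbd T (2*H-2) \<mu> t u1 u2) \<partial>lborel \<partial>lborel)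
      * (\<integral>\<^sup>+v1. \<integral>\<^sup>+v2. ennreal (Qbd T (2*H-2) \<mu> v1 v2) \<partial>lborel \<partial>lborel)"
    by (rule Gbd_int)
  also have "\<dots> \<le> ennreal ((H*(2*H-1))^2) * (Dc \<mu> (2*H-2) * Ef T \<mu> (2*H-2) t) * (\<integral>\<^sup>+v1. \<integral>\<^sup>+v2. ennreal (Qbd T (2*H-2) \<mu> v1 v2) \<partial>lborel \<partial>lborel)"
    apply (intro mult_right_mono mult_left_mono)
    using NA_bound[OF assms(1), of "2*H-2" \<mu>] by (auto simp: Ef_def)
  finally show ?thesis .
qed

lemma Gbd_fin:
  fixes H T \<mu> t :: real
  assumes "1/2 < H" "H < 1" "0 < T" "t \<le> T" "0 < \<mu>" "\<mu> < 1/2" "\<mu> + (2*H-2) < 0"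
    and E: "Ef T \<mu> (2*H-2) t < \<infinity>"
  shows "(\<integral>\<^sup>+z. ennreal (Gbd H T \<mu> t z) \<partial>lborel) < \<infinity>"
proof -
  have D: "Dc \<mu> (2*H-2) < \<infinity>" unfolding Dc_def by (rule Dfin) (use assms in auto)
  have NB: "(\<integral>\<^sup>+v1. \<integral>\<^sup>+v2. ennreal (Qbd T (2*H-2) \<mu> v1 v2) \<partial>lborel \<partial>lborel) < \<infinity>"
    by (rule NB_fin) (use assms in auto)
  show ?thesis
    by (rule le_less_trans[OF Gbd_le[OF assms(4)]]) (use D NB E in \<open>simp add: ennreal_mult_less_top\<close>)
qed

lemma Gbd_integrable:
  fixes H T \<mu> t :: real
  assumes "1/2 < H" "H < 1" "0 < T" "t \<le> T" "0 < \<mu>" "\<mu> < 1/2" "\<mu> + (2*H-2) < 0"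
    and E: "Ef T \<mu> (2*H-2) t < \<infinity>"
  shows "integrable lborel (Gbd H T \<mu> t)"
proof (rule integrableI_bounded[OF Gbd_meas])
  have "(\<integral>\<^sup>+z. ennreal (norm (Gbd H T \<mu> t z)) \<partial>lborel) = (\<integral>\<^sup>+z. ennreal (Gbd H T \<mu> t z) \<partial>lborel)"
    by (rule nn_integral_cong) (simp add: Gbd_def Pbd_nonneg Qbd_nonneg)
  then show "(\<integral>\<^sup>+z. ennreal (norm (Gbd H T \<mu> t z)) \<partial>lborel) < \<infinity>"
    using Gbd_fin[OF assms] by simp
qed

lemma integ_F:
  fixes H T lam w \<mu> t :: real and \<alpha> :: complex
  assumes "1/2 < H" "H < 1" "0 < T" "t \<le> T" "0 < \<mu>" "\<mu> \<le> lam" "\<mu> < 1/2" "\<mu> + (2*H-2) < 0"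
    and al: "\<alpha> = complex_of_real lam - \<i> * complex_of_real w"
    and E: "Ef T \<mu> (2*H-2) t < \<infinity>"
  shows "integrable lborel (\<lambda>z. indicator (cube4 T) z *\<^sub>R tensor_integrand H (psi T \<alpha> t) z)"
    and "(\<integral>\<^sup>+z. ennreal (norm (indicator (cube4 T) z *\<^sub>R tensor_integrand H (psi T \<alpha> t) z)) \<partial>lborel)
          \<le> ennreal ((H*(2*H-1))^2) * (Dc \<mu> (2*H-2) * Ef T \<mu> (2*H-2) t) * (\<integral>\<^sup>+v1. \<integral>\<^sup>+v2. ennreal (Qbd T (2*H-2) \<mu> v1 v2) \<partial>lborel \<partial>lborel)"
proof -
  let ?f = "\<lambda>z. indicator (cube4 T) z *\<^sub>R tensor_integrand H (psi T \<alpha> t) z"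
  have cube[measurable]: "cube4 T \<in> sets lborel" by (rule cube_sets)
  have [measurable]: "tensor_integrand H (psi T \<alpha> t) \<in> borel_measurable lborel"
    by (rule tensor_meas[OF assms(4)])
  have meas: "?f \<in> borel_measurable lborel"
    by measurable
  have "(\<integral>\<^sup>+z. ennreal (norm (?f z)) \<partial>lborel) \<le> (\<integral>\<^sup>+z. ennreal (Gbd H T \<mu> t z) \<partial>lborel)"
    by (rule nn_integral_mono) (use F_pw[OF assms(4,5,6) al] in \<open>simp add: ennreal_leI\<close>)
  also have "\<dots> \<le> ennreal ((H*(2*H-1))^2) * (Dc \<mu> (2*H-2) * Ef T \<mu> (2*H-2) t) * (\<integral>\<^sup>+v1. \<integral>\<^sup>+v2. ennreal (Qbd T (2*H-2) \<mu> v1 v2) \<partial>lborel \<partial>lborel)"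
    by (rule Gbd_le[OF assms(4)])
  finally show bound: "(\<integral>\<^sup>+z. ennreal (norm (?f z)) \<partial>lborel)
          \<le> ennreal ((H*(2*H-1))^2) * (Dc \<mu> (2*H-2) * Ef T \<mu> (2*H-2) t) * (\<integral>\<^sup>+v1. \<integral>\<^sup>+v2. ennreal (Qbd T (2*H-2) \<mu> v1 v2) \<partial>lborel \<partial>lborel)" .
  have D: "Dc \<mu> (2*H-2) < \<infinity>" unfolding Dc_def by (rule Dfin) (use assms in auto)
  have NB: "(\<integral>\<^sup>+v1. \<integral>\<^sup>+v2. ennreal (Qbd T (2*H-2) \<mu> v1 v2) \<partial>lborel \<partial>lborel) < \<infinity>"
    by (rule NB_fin) (use assms in auto)
  show "integrable lborel ?f"
  proof (rule integrableI_bounded[OF meas])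
    show "(\<integral>\<^sup>+z. ennreal (norm (?f z)) \<partial>lborel) < \<infinity>"
      by (rule le_less_trans[OF bound]) (use D NB E in \<open>simp add: ennreal_mult_less_top\<close>)
  qed
qed

lemma SMG_abs:
  fixes H T lam w \<mu> t e :: real and \<alpha> :: complex
  assumes "1/2 < H" "H < 1" "0 < T" "t \<le> T" "0 < \<mu>" "\<mu> \<le> lam" "\<mu> < 1/2" "\<mu> + (2*H-2) < 0"
    and al: "\<alpha> = complex_of_real lam - \<i> * complex_of_real w"
    and E: "Ef T \<mu> (2*H-2) t \<le> ennreal e" and e: "0 \<le> e"
  shows "\<bar>second_moment_G H T \<alpha> t\<bar> \<le> (H*(2*H-1))^2 * enn2real (Dc \<mu> (2*H-2)) * e
            * enn2real (\<integral>\<^sup>+v1. \<integral>\<^sup>+v2. ennreal (Qbd T (2*H-2) \<mu> v1 v2) \<partial>lborel \<partial>lborel)"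
proof -
  let ?NB = "(\<integral>\<^sup>+v1. \<integral>\<^sup>+v2. ennreal (Qbd T (2*H-2) \<mu> v1 v2) \<partial>lborel \<partial>lborel)"
  have Ef: "Ef T \<mu> (2*H-2) t < \<infinity>" using E by (simp add: le_less_trans)
  note I = integ_F[OF assms(1-9) Ef]
  have D: "Dc \<mu> (2*H-2) < \<infinity>" unfolding Dc_def by (rule Dfin) (use assms in auto)
  have NB: "?NB < \<infinity>" by (rule NB_fin) (use assms in auto)
  let ?I = "set_lebesgue_integral lborel (cube4 T) (tensor_integrand H (psi T \<alpha> t))"
  have "\<bar>second_moment_G H T \<alpha> t\<bar> \<le> cmod ?I"
    unfolding second_moment_G_def tensor_norm2_def by (rule abs_Re_le_cmod)
  moreover have "ennreal (cmod ?I) \<le> ennreal ((H*(2*H-1))^2 * enn2real (Dc \<mu> (2*H-2)) * e * enn2real ?NB)"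
  proof -
    have "ennreal (cmod ?I) \<le> (\<integral>\<^sup>+z. ennreal (norm (indicator (cube4 T) z *\<^sub>R tensor_integrand H (psi T \<alpha> t) z)) \<partial>lborel)"
      unfolding set_lebesgue_integral_def by (rule integral_norm_bound_ennreal[OF I(1)])
    also have "\<dots> \<le> ennreal ((H*(2*H-1))^2) * (Dc \<mu> (2*H-2) * Ef T \<mu> (2*H-2) t) * ?NB"
      by (rule I(2))
    also have "\<dots> \<le> ennreal ((H*(2*H-1))^2) * (Dc \<mu> (2*H-2) * ennreal e) * ?NB"
      by (intro mult_right_mono mult_left_mono E) auto
    also have "\<dots> = ennreal ((H*(2*H-1))^2 * enn2real (Dc \<mu> (2*H-2)) * e * enn2real ?NB)"
    proof -
      define d where "d = enn2real (Dc \<mu> (2*H-2))"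
      define n where "n = enn2real ?NB"
      have d: "Dc \<mu> (2*H-2) = ennreal d" "0 \<le> d" using D unfolding d_def by auto
      have n: "?NB = ennreal n" "0 \<le> n" using NB unfolding n_def by auto
      have "ennreal ((H*(2*H-1))^2) * (ennreal d * ennreal e) * ennreal n = ennreal ((H*(2*H-1))^2 * d * e * n)"
        using d(2) n(2) e by (simp add: ennreal_mult'[symmetric] mult.assoc)
      then show ?thesis using d n by simp
    qed
    finally show ?thesis .
  qed
  then have "cmod ?I \<le> (H*(2*H-1))^2 * enn2real (Dc \<mu> (2*H-2)) * e * enn2real ?NB"
    by (subst (asm) ennreal_le_iff) (auto simp: e)
  ultimately show ?thesis by linarith
qed

lemma psi_eq:
  assumes "t \<le> T" "u \<le> t \<or> T \<le> u"
  shows "psi T \<alpha> t u v = psi T \<alpha> T u v"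
  using assms unfolding psi_def by (cases "u = T") auto

theorem proposition3p1:
  fixes H T lam w :: real and \<alpha> :: complex
  assumes "1/2 < H" and "H < 1" and "T > 0" and "lam > 0"
    and "\<alpha> = complex_of_real lam - \<i> * complex_of_real w"
  shows "(\<forall>t\<in>{0..<T}. set_integrable lborel (cube4 T) (tensor_integrand H (psi T \<alpha> t)))
    \<and> (lam < 1 - H \<longrightarrow>
         Limsup (at_left T) (\<lambda>t. ereal ((T - t) powr (2 * (1 - H - lam)) * second_moment_G H T \<alpha> t)) < \<infinity>)
    \<and> (lam = 1 - H \<longrightarrow>
         Limsup (at_left T) (\<lambda>t. ereal (second_moment_G H T \<alpha> t / (- ln (T - t)))) < \<infinity>)
    \<and> (1 - H < lam \<and> lam < 1 \<longrightarrow>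
         (\<exists>L::real. ((\<lambda>t. second_moment_G H T \<alpha> t) \<longlongrightarrow> L) (at_left T)))"
proof (intro conjI impI ballI)
  let ?q = "2*H-2"
  let ?c = "(H*(2*H-1))^2"
  let ?NB = "\<lambda>\<mu>. (\<integral>\<^sup>+v1. \<integral>\<^sup>+v2. ennreal (Qbd T (2*H-2) \<mu> v1 v2) \<partial>lborel \<partial>lborel)"
  fix t assume t: "t \<in> {0..<T}"
  define \<mu> where "\<mu> = min lam ((1-H)/2)"
  have m: "0 < \<mu>" "\<mu> \<le> lam" "\<mu> < 1/2" "\<mu> + ?q < 0" "2*\<mu> + ?q < 0"
    using assms(1) assms(2) assms(4) unfolding \<mu>_def by (auto simp: min_def field_simps)
  have "Ef T \<mu> ?q t \<le> ennreal ((T-t) powr (2*\<mu>+?q) / (-(2*\<mu>+?q)))"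
    by (rule E_neg) (use m t in auto)
  then have "Ef T \<mu> ?q t < \<infinity>" by (simp add: le_less_trans)
  from integ_F(1)[OF assms(1) assms(2) assms(3) _ m(1-4) assms(5) this] t
  show "set_integrable lborel (cube4 T) (tensor_integrand H (psi T \<alpha> t))"
    unfolding set_integrable_def by simp
next
  assume lt: "lam < 1 - H"
  have m: "0 < lam" "lam \<le> lam" "lam < 1/2" "lam + (2*H-2) < 0" "2*lam + (2*H-2) < 0"
    using assms lt by auto
  define B where "B = (H*(2*H-1))^2 * enn2real (Dc lam (2*H-2)) * enn2real (\<integral>\<^sup>+v1. \<integral>\<^sup>+v2. ennreal (Qbd T (2*H-2) lam v1 v2) \<partial>lborel \<partial>lborel) / (-(2*lam+(2*H-2)))"
  have ev: "eventually (\<lambda>t. t \<in> {0<..<T}) (at_left T)"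
    by (rule eventually_at_left_real) (use assms in simp)
  have "eventually (\<lambda>t. ereal ((T - t) powr (2 * (1 - H - lam)) * second_moment_G H T \<alpha> t) \<le> ereal B) (at_left T)"
    using ev
  proof eventually_elim
    case (elim t)
    then have tT: "t \<le> T" "t < T" by auto
    define \<epsilon> where "\<epsilon> = T - t"
    have e0: "0 < \<epsilon>" using elim \<epsilon>_def by auto
    have E: "Ef T lam (2*H-2) t \<le> ennreal (\<epsilon> powr (2*lam+(2*H-2)) / (-(2*lam+(2*H-2))))"
      unfolding \<epsilon>_def by (rule E_neg) (use m tT in auto)
    have S: "\<bar>second_moment_G H T \<alpha> t\<bar> \<le> (H*(2*H-1))^2 * enn2real (Dc lam (2*H-2)) * (\<epsilon> powr (2*lam+(2*H-2)) / (-(2*lam+(2*H-2))))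
            * enn2real (\<integral>\<^sup>+v1. \<integral>\<^sup>+v2. ennreal (Qbd T (2*H-2) lam v1 v2) \<partial>lborel \<partial>lborel)"
      by (rule SMG_abs[OF assms(1) assms(2) assms(3) tT(1) m(1-4) assms(5) E]) (use m in auto)
    have ex: "2 * (1 - H - lam) = -(2*lam+(2*H-2))" by simp
    have pp: "\<epsilon> powr (-(2*lam+(2*H-2))) * \<epsilon> powr (2*lam+(2*H-2)) = 1"
      using e0 by (simp add: powr_add[symmetric])
    have "(T - t) powr (2 * (1 - H - lam)) * second_moment_G H T \<alpha> t \<le> \<epsilon> powr (-(2*lam+(2*H-2))) * \<bar>second_moment_G H T \<alpha> t\<bar>"
      unfolding ex \<epsilon>_def[symmetric] by (rule mult_left_mono) auto
    also have "\<dots> \<le> \<epsilon> powr (-(2*lam+(2*H-2))) * ((H*(2*H-1))^2 * enn2real (Dc lam (2*H-2)) * (\<epsilon> powr (2*lam+(2*H-2)) / (-(2*lam+(2*H-2))))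
            * enn2real (\<integral>\<^sup>+v1. \<integral>\<^sup>+v2. ennreal (Qbd T (2*H-2) lam v1 v2) \<partial>lborel \<partial>lborel))"
      by (rule mult_left_mono[OF S]) auto
    also have "\<dots> = B"
      unfolding B_def using pp by (simp add: field_simps)
    finally show ?case by simp
  qed
  then have "Limsup (at_left T) (\<lambda>t. ereal ((T - t) powr (2 * (1 - H - lam)) * second_moment_G H T \<alpha> t)) \<le> ereal B"
    by (rule Limsup_bounded)
  then show "Limsup (at_left T) (\<lambda>t. ereal ((T - t) powr (2 * (1 - H - lam)) * second_moment_G H T \<alpha> t)) < \<infinity>"
    by (rule le_less_trans) simp
next
  assume eq: "lam = 1 - H"
  have m: "0 < lam" "lam \<le> lam" "lam < 1/2" "lam + (2*H-2) < 0" "2*lam + (2*H-2) = 0"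
    using assms eq by auto
  define C where "C = (H*(2*H-1))^2 * enn2real (Dc lam (2*H-2)) * enn2real (\<integral>\<^sup>+v1. \<integral>\<^sup>+v2. ennreal (Qbd T (2*H-2) lam v1 v2) \<partial>lborel \<partial>lborel)"
  have C0: "0 \<le> C" unfolding C_def by simp
  define \<delta> where "\<delta> = min T (exp (-(\<bar>ln T\<bar> + 1)))"
  have d0: "0 < \<delta>" "\<delta> \<le> T" "\<delta> \<le> exp (-(\<bar>ln T\<bar> + 1))" using assms(3) unfolding \<delta>_def by auto
  have ev: "eventually (\<lambda>t. t \<in> {T-\<delta><..<T}) (at_left T)"
    by (rule eventually_at_left_real) (use d0 in simp)
  have "eventually (\<lambda>t. ereal (second_moment_G H T \<alpha> t / (- ln (T - t))) \<le> ereal (2*C)) (at_left T)"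
    using ev
  proof eventually_elim
    case (elim t)
    define \<epsilon> where "\<epsilon> = T - t"
    have e0: "0 < \<epsilon>" "\<epsilon> < \<delta>" using elim \<epsilon>_def by auto
    have tT: "t \<le> T" using e0 \<epsilon>_def by simp
    have eT: "\<epsilon> \<le> T" using e0 d0 by simp
    have E: "Ef T lam (2*H-2) t \<le> ennreal (ln T - ln \<epsilon>)"
      unfolding \<epsilon>_def by (rule E_zero) (use m e0 eT \<epsilon>_def in auto)
    have lnle: "ln \<epsilon> \<le> ln T" using e0 eT by simp
    have S: "\<bar>second_moment_G H T \<alpha> t\<bar> \<le> (H*(2*H-1))^2 * enn2real (Dc lam (2*H-2)) * (ln T - ln \<epsilon>)
            * enn2real (\<integral>\<^sup>+v1. \<integral>\<^sup>+v2. ennreal (Qbd T (2*H-2) lam v1 v2) \<partial>lborel \<partial>lborel)"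
      by (rule SMG_abs[OF assms(1) assms(2) assms(3) tT m(1-4) assms(5) E]) (use lnle in auto)
    then have S': "\<bar>second_moment_G H T \<alpha> t\<bar> \<le> C * (ln T - ln \<epsilon>)"
      unfolding C_def by (simp add: mult_ac)
    have "ln \<epsilon> < ln (exp (-(\<bar>ln T\<bar> + 1)))"
      using e0 d0 by (subst ln_less_cancel_iff) auto
    then have le: "\<bar>ln T\<bar> + 1 < - ln \<epsilon>" by simp
    have pos: "0 < - ln \<epsilon>" using le by linarith
    have "second_moment_G H T \<alpha> t / (- ln \<epsilon>) \<le> \<bar>second_moment_G H T \<alpha> t\<bar> / (- ln \<epsilon>)"
      by (rule divide_right_mono) (use pos in auto)
    also have "\<dots> \<le> C * (ln T - ln \<epsilon>) / (- ln \<epsilon>)"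
      by (rule divide_right_mono[OF S']) (use pos in auto)
    also have "\<dots> \<le> 2 * C"
    proof -
      have "ln T - ln \<epsilon> \<le> 2 * (- ln \<epsilon>)" using le by linarith
      then have "C * (ln T - ln \<epsilon>) \<le> (2 * C) * (- ln \<epsilon>)" using C0
        by (metis mult.assoc mult.left_commute mult_left_mono)
      then show ?thesis by (rule pos_divide_le_eq[OF pos, THEN iffD2])
    qed
    finally show ?case unfolding \<epsilon>_def by simp
  qed
  then have "Limsup (at_left T) (\<lambda>t. ereal (second_moment_G H T \<alpha> t / (- ln (T - t)))) \<le> ereal (2*C)"
    by (rule Limsup_bounded)
  then show "Limsup (at_left T) (\<lambda>t. ereal (second_moment_G H T \<alpha> t / (- ln (T - t)))) < \<infinity>"
    by (rule le_less_trans) simp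
next
  assume lt: "1 - H < lam \<and> lam < 1"
  define m0 where "m0 = min lam (min (1/2) (2-2*H))"
  have m0: "m0 \<le> lam" "m0 \<le> 1/2" "m0 \<le> 2-2*H" "1 - H < m0"
    using assms lt unfolding m0_def by (auto simp: min_def)
  define \<mu> where "\<mu> = (1 - H + m0) / 2"
  have m: "0 < \<mu>" "\<mu> \<le> lam" "\<mu> < 1/2" "\<mu> + (2*H-2) < 0" "0 < 2*\<mu> + (2*H-2)"
    using assms(1,2) m0 unfolding \<mu>_def by (auto simp: field_simps)
  have Efin: "Ef T \<mu> (2*H-2) t < \<infinity>" if "t \<le> T" for t
  proof -
    have "Ef T \<mu> (2*H-2) t \<le> ennreal (T powr (2*\<mu>+(2*H-2)) / (2*\<mu>+(2*H-2)))"
      by (rule E_pos) (use m that assms(3) in auto)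
    then show ?thesis by (simp add: le_less_trans)
  qed
  let ?s = "\<lambda>t z. indicator (cube4 T) z *\<^sub>R tensor_integrand H (psi T \<alpha> t) z"
  have cube[measurable]: "cube4 T \<in> sets lborel" by (rule cube_sets)
  have smeas: "?s t \<in> borel_measurable lborel" if "t \<le> T" for t
  proof -
    have [measurable]: "tensor_integrand H (psi T \<alpha> t) \<in> borel_measurable lborel"
      by (rule tensor_meas[OF that])
    show ?thesis by measurable
  qed
  have wint: "integrable lborel (Gbd H T \<mu> T)"
    by (rule Gbd_integrable) (use assms(1) assms(2) assms(3) m Efin in auto)
  have "((\<lambda>t. Re (integral\<^sup>L lborel (?s t))) \<longlongrightarrow> Re (integral\<^sup>L lborel (?s T))) (at_left T)"
  proof (rule tendsto_at_left_sequentially[of 0])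
    show "0 < T" by fact
    fix S :: "nat \<Rightarrow> real"
    assume S: "\<And>n. S n < T" "\<And>n. 0 < S n" "incseq S" "S \<longlonglongrightarrow> T"
    have "(\<lambda>n. integral\<^sup>L lborel (?s (S n))) \<longlonglongrightarrow> integral\<^sup>L lborel (?s T)"
    proof (rule integral_dominated_convergence[where w="Gbd H T \<mu> T"])
      show "?s T \<in> borel_measurable lborel" by (rule smeas) simp
      show "?s (S n) \<in> borel_measurable lborel" for n by (rule smeas) (use S(1) in \<open>simp add: less_imp_le\<close>)
      show "integrable lborel (Gbd H T \<mu> T)" by (rule wint)
      show "AE z in lborel. norm (?s (S n) z) \<le> Gbd H T \<mu> T z" for n
      proof (rule AE_I2)
        fix z :: "real\<times>real\<times>real\<times>real"
        have SnT: "S n \<le> T" using S(1)[of n] by simp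
        have "norm (?s (S n) z) \<le> Gbd H T \<mu> (S n) z"
          by (rule F_pw[OF SnT m(1,2) assms(5)])
        also have "\<dots> \<le> Gbd H T \<mu> T z"
          unfolding Gbd_def
          by (intro mult_left_mono mult_right_mono Pbd_mono SnT) (auto simp: Qbd_nonneg)
        finally show "norm (?s (S n) z) \<le> Gbd H T \<mu> T z" .
      qed
      show "AE z in lborel. (\<lambda>n. ?s (S n) z) \<longlonglongrightarrow> ?s T z"
      proof (rule AE_I2)
        fix z :: "real\<times>real\<times>real\<times>real"
        obtain u1 u2 v1 v2 where z: "z = (u1,u2,v1,v2)" by (cases z) auto
        have evu: "eventually (\<lambda>n. u \<le> S n \<or> T \<le> u) sequentially" for u
        proof (cases "u < T")
          case True
          from order_tendstoD(1)[OF S(4) True] show ?thesis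
            by eventually_elim simp
        next
          case False then show ?thesis by simp
        qed
        have "eventually (\<lambda>n. ?s (S n) z = ?s T z) sequentially"
          using evu[of u1] evu[of u2]
        proof eventually_elim
          case (elim n)
          have SnT: "S n \<le> T" using S(1)[of n] by simp
          show ?case
            unfolding z tensor_integrand_def
            using psi_eq[OF SnT, of u1 \<alpha> v1] psi_eq[OF SnT, of u2 \<alpha> v2] elim by simp
        qed
        then show "(\<lambda>n. ?s (S n) z) \<longlonglongrightarrow> ?s T z"
          by (rule tendsto_eventually)
      qed
    qed
    then show "(\<lambda>n. Re (integral\<^sup>L lborel (?s (S n)))) \<longlonglongrightarrow> Re (integral\<^sup>L lborel (?s T))"
      by (rule tendsto_Re)
  qed
  then show "\<exists>L::real. ((\<lambda>t. second_moment_G H T \<alpha> t) \<longlongrightarrow> L) (at_left T)"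
    unfolding second_moment_G_def tensor_norm2_def set_lebesgue_integral_def by blast
qed
end
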